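(* Let $A\in\mathrm{GL}_{n}(\mathbb{Z})$ be diagonalizable over $\mathbb{C}$ and have no eigenvalue of absolute value $1$. Then every length function $l$ on $G=\mathbb{Z}^{n}\rtimes_{A}\mathbb{Z}$ vanishes on $\mathbb{Z}^{n}$.
   Context: $\mathbb{Z}^{n}\rtimes_{A}\mathbb{Z}$ is the semidirect product in which a generator of $\mathbb{Z}$ acts on $\mathbb{Z}^n$ by $A$. A length function on a group $G$ is a function $l:G\to[0,\infty)$ such that $l(g^{n})=|n|\,l(g)$ for all $g\in G,n\in\mathbb{Z}$; $l(hgh^{-1})=l(g)$ for all $g,h$; and $l(ab)\leq l(a)+l(b)$ whenever $a,b$ commute. *)

theory Defs
  imports "Jordan_Normal_Form.Matrix" "Jordan_Normal_Form.Char_Poly" "HOL-Algebra.Group"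
begin

definition inv_mat_int :: "int mat \<Rightarrow> int mat" where
  "inv_mat_int A = (SOME B. B \<in> carrier_mat (dim_row A) (dim_row A) \<and> inverts_mat A B \<and> inverts_mat B A)"

definition mat_int_pow :: "int mat \<Rightarrow> int \<Rightarrow> int mat" where
  "mat_int_pow A k = (if 0 \<le> k then A ^\<^sub>m nat k else (inv_mat_int A) ^\<^sub>m nat (- k))"

definition sdp_group :: "nat \<Rightarrow> int mat \<Rightarrow> (int vec \<times> int) monoid" where
  "sdp_group n A = \<lparr> carrier = carrier_vec n \<times> UNIV,
     mult = (\<lambda>(v,k) (w,m). (v + mat_int_pow A k *\<^sub>v w, k + m)),
     one = (0\<^sub>v n, 0) \<rparr>"

definition length_function :: "('a, 'b) monoid_scheme \<Rightarrow> ('a \<Rightarrow> real) \<Rightarrow> bool" where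
  "length_function G l \<longleftrightarrow>
     (\<forall>g\<in>carrier G. 0 \<le> l g) \<and>
     (\<forall>g\<in>carrier G. \<forall>m::int. l (g [^]\<^bsub>G\<^esub> m) = \<bar>real_of_int m\<bar> * l g) \<and>
     (\<forall>g\<in>carrier G. \<forall>h\<in>carrier G. l (h \<otimes>\<^bsub>G\<^esub> g \<otimes>\<^bsub>G\<^esub> inv\<^bsub>G\<^esub> h) = l g) \<and>
     (\<forall>a\<in>carrier G. \<forall>b\<in>carrier G. a \<otimes>\<^bsub>G\<^esub> b = b \<otimes>\<^bsub>G\<^esub> a \<longrightarrow>
        l (a \<otimes>\<^bsub>G\<^esub> b) \<le> l a + l b)"

end

theory Submission
  imports Defs
begin


lemma inv_mat_int_props:
  assumes A: "A \<in> carrier_mat n n" and inv: "invertible_mat A"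
  shows "inv_mat_int A \<in> carrier_mat n n \<and> A * inv_mat_int A = 1\<^sub>m n \<and> inv_mat_int A * A = 1\<^sub>m n"
proof -
  from inv obtain B where B: "inverts_mat A B" "inverts_mat B A" unfolding invertible_mat_def by blast
  have dA: "dim_row A = n" "dim_col A = n" using A by auto
  have "dim_col B = n" using B(1) dA unfolding inverts_mat_def
    by (metis index_mult_mat(3) index_one_mat(3))
  moreover have "dim_row B = n" using B(2) dA unfolding inverts_mat_def
    by (metis index_mult_mat(3) index_one_mat(3))
  ultimately have "B \<in> carrier_mat (dim_row A) (dim_row A) \<and> inverts_mat A B \<and> inverts_mat B A"
    using B dA by auto
  then have "inv_mat_int A \<in> carrier_mat (dim_row A) (dim_row A) \<and> inverts_mat A (inv_mat_int A) \<and> inverts_mat (inv_mat_int A) A"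
    unfolding inv_mat_int_def by (rule someI)
  then show ?thesis using dA unfolding inverts_mat_def by auto
qed

lemma mat_vec_zero[simp]: "M \<in> carrier_mat m n \<Longrightarrow> M *\<^sub>v 0\<^sub>v n = 0\<^sub>v m"
  by (rule eq_vecI) (auto simp: scalar_prod_def)

lemma smult_vec_zero_zero[simp]: "(0::int) \<cdot>\<^sub>v 0\<^sub>v n = 0\<^sub>v n"
  by (rule eq_vecI) auto

lemma sdp_mult: "(v,k) \<otimes>\<^bsub>sdp_group n A\<^esub> (w,m) = (v + mat_int_pow A k *\<^sub>v w, k + m)"
  by (simp add: sdp_group_def)

lemma sdp_one: "\<one>\<^bsub>sdp_group n A\<^esub> = (0\<^sub>v n, 0)"
  by (simp add: sdp_group_def)

lemma sdp_carrier: "carrier (sdp_group n A) = carrier_vec n \<times> UNIV"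
  by (simp add: sdp_group_def)

lemma mat_int_pow0: "A \<in> carrier_mat n n \<Longrightarrow> mat_int_pow A 0 = 1\<^sub>m n"
  by (simp add: mat_int_pow_def)

lemma mat_int_pow1: "A \<in> carrier_mat n n \<Longrightarrow> mat_int_pow A 1 = A"
  by (simp add: mat_int_pow_def)

lemma sdp_pow_nat:
  assumes A: "A \<in> carrier_mat n n" and w: "w \<in> carrier_vec n"
  shows "(w, 0::int) [^]\<^bsub>sdp_group n A\<^esub> (N::nat) = (of_nat N \<cdot>\<^sub>v w, 0)"
proof (induct N)
  case 0
  show ?case using w by (auto simp: sdp_one intro!: eq_vecI)
next
  case (Suc N)
  have "(w, 0::int) [^]\<^bsub>sdp_group n A\<^esub> (Suc N) = (of_nat N \<cdot>\<^sub>v w, 0) \<otimes>\<^bsub>sdp_group n A\<^esub> (w, 0)"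
    using Suc by simp
  also have "\<dots> = (of_nat N \<cdot>\<^sub>v w + 1\<^sub>m n *\<^sub>v w, 0)" by (simp add: sdp_mult mat_int_pow0[OF A])
  also have "\<dots> = (of_nat (Suc N) \<cdot>\<^sub>v w, 0)" using w by (auto intro!: eq_vecI simp: algebra_simps)
  finally show ?case .
qed

lemma sdp_pow_int:
  assumes "0 \<le> m"
  shows "g [^]\<^bsub>sdp_group n A\<^esub> (m::int) = g [^]\<^bsub>sdp_group n A\<^esub> (nat m)"
  using assms by (simp add: int_pow_def nat_pow_def Let_def)

lemma sdp_inv_t:
  assumes A: "A \<in> carrier_mat n n" and inv: "invertible_mat A"
  shows "inv\<^bsub>sdp_group n A\<^esub> (0\<^sub>v n, 1) = (0\<^sub>v n, -1)"
proof -
  define B where "B = inv_mat_int A"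
  have B: "B \<in> carrier_mat n n" "A * B = 1\<^sub>m n" "B * A = 1\<^sub>m n"
    using inv_mat_int_props[OF A inv] unfolding B_def by auto
  have pm1: "mat_int_pow A (-1) = 1\<^sub>m n * B"
    by (simp add: mat_int_pow_def B_def[symmetric] B(1)[unfolded carrier_mat_def, simplified])
  show ?thesis unfolding m_inv_def
  proof (rule the_equality)
    show "(0\<^sub>v n, -1) \<in> carrier (sdp_group n A) \<and>
      (0\<^sub>v n, 1) \<otimes>\<^bsub>sdp_group n A\<^esub> (0\<^sub>v n, -1) = \<one>\<^bsub>sdp_group n A\<^esub> \<and>
      (0\<^sub>v n, -1) \<otimes>\<^bsub>sdp_group n A\<^esub> (0\<^sub>v n, 1) = \<one>\<^bsub>sdp_group n A\<^esub>"
      using A B by (simp add: sdp_mult sdp_one sdp_carrier mat_int_pow1 pm1)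
  next
    fix y assume y: "y \<in> carrier (sdp_group n A) \<and>
      (0\<^sub>v n, 1) \<otimes>\<^bsub>sdp_group n A\<^esub> y = \<one>\<^bsub>sdp_group n A\<^esub> \<and>
      y \<otimes>\<^bsub>sdp_group n A\<^esub> (0\<^sub>v n, 1) = \<one>\<^bsub>sdp_group n A\<^esub>"
    obtain u j where yuj: "y = (u, j)" by (cases y)
    have u: "u \<in> carrier_vec n" using y yuj by (simp add: sdp_carrier)
    have "0\<^sub>v n + A *\<^sub>v u = 0\<^sub>v n" "1 + j = 0"
      using y yuj by (simp_all add: sdp_mult sdp_one mat_int_pow1[OF A])
    then have Au: "A *\<^sub>v u = 0\<^sub>v n" and j: "j = -1" using A u by auto
    have "u = (B * A) *\<^sub>v u" using B u by simp
    also have "\<dots> = B *\<^sub>v (A *\<^sub>v u)" using A B u by (meson assoc_mult_mat_vec)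
    also have "\<dots> = 0\<^sub>v n" using Au B by simp
    finally show "y = (0\<^sub>v n, -1)" using yuj j by simp
  qed
qed

lemma group_facts:
  assumes A: "A \<in> carrier_mat n n" and inv: "invertible_mat A"
    and lf: "length_function (sdp_group n A) l"
  shows "(\<forall>w\<in>carrier_vec n. 0 \<le> l (w,0))"
    "l (0\<^sub>v n, 0) = 0"
    "\<forall>w\<in>carrier_vec n. \<forall>N::nat. l (of_nat N \<cdot>\<^sub>v w, 0) = real N * l (w,0)"
    "\<forall>v\<in>carrier_vec n. \<forall>w\<in>carrier_vec n. l (v + w, 0) \<le> l (v,0) + l (w,0)"
    "\<forall>w\<in>carrier_vec n. l (A *\<^sub>v w, 0) = l (w,0)"
proof -
  note L = lf[unfolded length_function_def]
  show "\<forall>w\<in>carrier_vec n. 0 \<le> l (w,0)" using L by (simp add: sdp_carrier)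
  show hom: "\<forall>w\<in>carrier_vec n. \<forall>N::nat. l (of_nat N \<cdot>\<^sub>v w, 0) = real N * l (w,0)"
  proof (intro ballI allI)
    fix w :: "int vec" and N :: nat assume w: "w \<in> carrier_vec n"
    have "l ((w,0) [^]\<^bsub>sdp_group n A\<^esub> (int N)) = \<bar>real_of_int (int N)\<bar> * l (w,0)"
      using L w by (simp add: sdp_carrier)
    then show "l (of_nat N \<cdot>\<^sub>v w, 0) = real N * l (w,0)"
      using sdp_pow_int[of "int N"] sdp_pow_nat[OF A w, of N] by simp
  qed
  show "l (0\<^sub>v n, 0) = 0" using hom[rule_format, of "0\<^sub>v n" 0] by simp
  show "\<forall>v\<in>carrier_vec n. \<forall>w\<in>carrier_vec n. l (v + w, 0) \<le> l (v,0) + l (w,0)"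
  proof (intro ballI)
    fix v w :: "int vec" assume v: "v \<in> carrier_vec n" and w: "w \<in> carrier_vec n"
    have e1: "(v,0) \<otimes>\<^bsub>sdp_group n A\<^esub> (w,0) = (v + w, 0)"
      using w by (simp add: sdp_mult mat_int_pow0[OF A])
    have e2: "(w,0) \<otimes>\<^bsub>sdp_group n A\<^esub> (v,0) = (v + w, 0)"
      using v w by (simp add: sdp_mult mat_int_pow0[OF A] comm_add_vec)
    show "l (v + w, 0) \<le> l (v,0) + l (w,0)"
      using L v w e1 e2 by (metis (no_types, lifting) SigmaI UNIV_I sdp_carrier)
  qed
  show "\<forall>w\<in>carrier_vec n. l (A *\<^sub>v w, 0) = l (w,0)"
  proof
    fix w :: "int vec" assume w: "w \<in> carrier_vec n"
    have "(0\<^sub>v n, 1) \<otimes>\<^bsub>sdp_group n A\<^esub> (w, 0) \<otimes>\<^bsub>sdp_group n A\<^esub> inv\<^bsub>sdp_group n A\<^esub> (0\<^sub>v n, 1)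
       = (A *\<^sub>v w, 0)"
      using A w by (simp add: sdp_inv_t[OF A inv] sdp_mult mat_int_pow1[OF A])
    then show "l (A *\<^sub>v w, 0) = l (w,0)"
      using L w by (metis (no_types, lifting) SigmaI UNIV_I sdp_carrier zero_carrier_vec)
  qed
qed



definition sc :: "complex vec \<Rightarrow> real" where
  "sc x = (\<Sum>i<dim_vec x. cmod (x $ i))"

definition mnorm :: "complex mat \<Rightarrow> real" where
  "mnorm M = (\<Sum>i<dim_row M. \<Sum>j<dim_col M. cmod (M $$ (i,j)))"

lemma sc_mult_bound:
  assumes M: "M \<in> carrier_mat m n" and x: "x \<in> carrier_vec n" and b: "\<forall>j<n. cmod (x $ j) \<le> b"
  shows "sc (M *\<^sub>v x) \<le> mnorm M * b"
proof -
  have "sc (M *\<^sub>v x) = (\<Sum>i<m. cmod (\<Sum>j<n. M $$ (i,j) * x $ j))"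
    using M x unfolding sc_def by (auto simp: mult_mat_vec_def scalar_prod_def atLeast0LessThan intro!: sum.cong)
  also have "\<dots> \<le> (\<Sum>i<m. \<Sum>j<n. cmod (M $$ (i,j)) * b)"
  proof (rule sum_mono)
    fix i assume "i \<in> {..<m}"
    have "cmod (\<Sum>j<n. M $$ (i,j) * x $ j) \<le> (\<Sum>j<n. cmod (M $$ (i,j) * x $ j))"
      by (rule norm_sum)
    also have "\<dots> \<le> (\<Sum>j<n. cmod (M $$ (i,j)) * b)"
      by (rule sum_mono) (auto simp: norm_mult intro!: mult_left_mono b[rule_format])
    finally show "cmod (\<Sum>j<n. M $$ (i,j) * x $ j) \<le> (\<Sum>j<n. cmod (M $$ (i,j)) * b)" .
  qed
  also have "\<dots> = mnorm M * b" using M unfolding mnorm_def by (simp add: sum_distrib_right)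
  finally show ?thesis .
qed

lemma sc_add: "x \<in> carrier_vec n \<Longrightarrow> y \<in> carrier_vec n \<Longrightarrow> sc (x + y) \<le> sc x + sc y"
  unfolding sc_def by (auto simp: sum.distrib[symmetric] intro!: sum_mono norm_triangle_ineq)

lemma sc_smult: "sc (c \<cdot>\<^sub>v x) = cmod c * sc x"
  unfolding sc_def by (auto simp: sum_distrib_left norm_mult)

lemma sc_nonneg: "0 \<le> sc x" unfolding sc_def by (auto intro: sum_nonneg)

lemma pow_invariant:
  assumes M: "M \<in> carrier_mat n n" and inv: "\<forall>w\<in>carrier_vec n. f (M *\<^sub>v w) = f w"
  shows "w \<in> carrier_vec n \<Longrightarrow> f (M ^\<^sub>m k *\<^sub>v w) = f w"
proof (induct k arbitrary: w)
  case 0 then show ?case using M by simp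
next
  case (Suc k)
  have "M ^\<^sub>m Suc k *\<^sub>v w = (M ^\<^sub>m k * M) *\<^sub>v w" by simp
  also have "\<dots> = M ^\<^sub>m k *\<^sub>v (M *\<^sub>v w)"
    by (rule assoc_mult_mat_vec[of _ n n _ n]) (use M Suc(2) in auto)
  finally have e: "M ^\<^sub>m Suc k *\<^sub>v w = M ^\<^sub>m k *\<^sub>v (M *\<^sub>v w)" .
  have Mw: "M *\<^sub>v w \<in> carrier_vec n" using M Suc(2) by simp
  show ?case unfolding e Suc(1)[OF Mw] using inv Suc(2) by simp
qed

definition trunc :: "nat \<Rightarrow> nat \<Rightarrow> int vec \<Rightarrow> int vec" where
  "trunc n j x = vec n (\<lambda>i. if i < j then x $ i else 0)"

lemma linear_bound:
  fixes f :: "int vec \<Rightarrow> real"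
  assumes P0: "\<forall>w\<in>carrier_vec n. 0 \<le> f w"
    and P1: "f (0\<^sub>v n) = 0"
    and P2: "\<forall>w\<in>carrier_vec n. \<forall>N::nat. f (of_nat N \<cdot>\<^sub>v w) = real N * f w"
    and P3: "\<forall>v\<in>carrier_vec n. \<forall>w\<in>carrier_vec n. f (v + w) \<le> f v + f w"
    and x: "x \<in> carrier_vec n"
  shows "f x \<le> (\<Sum>i<n. \<bar>real_of_int (x $ i)\<bar>) * (\<Sum>i<n. f (unit_vec n i) + f (- unit_vec n i))"
proof -
  define c where "c i = f (unit_vec n i) + f (- unit_vec n i)" for i
  have c0: "0 \<le> c i" if "i < n" for i using P0 that unfolding c_def by auto
  have single: "f (z \<cdot>\<^sub>v unit_vec n i) \<le> \<bar>real_of_int z\<bar> * c i" if i: "i < n" for z i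
  proof (cases "0 \<le> z")
    case True
    have "z \<cdot>\<^sub>v unit_vec n i = of_nat (nat z) \<cdot>\<^sub>v unit_vec n i" using True by simp
    then have "f (z \<cdot>\<^sub>v unit_vec n i) = real (nat z) * f (unit_vec n i)" using P2[rule_format, of "unit_vec n i" "nat z"] i by simp
    also have "\<dots> \<le> \<bar>real_of_int z\<bar> * c i"
    proof -
      have "0 \<le> f (- unit_vec n i)" using P0 i by simp
      then have "f (unit_vec n i) \<le> c i" unfolding c_def by simp
      moreover have "0 \<le> f (unit_vec n i)" using P0 i by simp
      ultimately show ?thesis using True by (intro mult_mono) auto
    qed
    finally show ?thesis .
  next
    case False
    have "z \<cdot>\<^sub>v unit_vec n i = of_nat (nat (-z)) \<cdot>\<^sub>v (- unit_vec n i)" using False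
      by (auto intro!: eq_vecI)
    then have "f (z \<cdot>\<^sub>v unit_vec n i) = real (nat (-z)) * f (- unit_vec n i)" using P2[rule_format, of "- unit_vec n i" "nat (-z)"] i by simp
    also have "\<dots> \<le> \<bar>real_of_int z\<bar> * c i"
    proof -
      have "0 \<le> f (unit_vec n i)" using P0 i by simp
      then have "f (- unit_vec n i) \<le> c i" unfolding c_def by simp
      moreover have "0 \<le> f (- unit_vec n i)" using P0 i by simp
      ultimately show ?thesis using False by (intro mult_mono) auto
    qed
    finally show ?thesis .
  qed
  have main: "f (trunc n j x) \<le> (\<Sum>i<j. \<bar>real_of_int (x $ i)\<bar> * c i)" if "j \<le> n" for j
    using that
  proof (induct j)
    case 0
    have "trunc n 0 x = 0\<^sub>v n" unfolding trunc_def by (auto intro!: eq_vecI)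
    then show ?case using P1 by simp
  next
    case (Suc j)
    have eq: "trunc n (Suc j) x = trunc n j x + (x $ j) \<cdot>\<^sub>v unit_vec n j"
      unfolding trunc_def by (rule eq_vecI) (auto simp: unit_vec_def less_Suc_eq)
    have "f (trunc n (Suc j) x) \<le> f (trunc n j x) + f ((x $ j) \<cdot>\<^sub>v unit_vec n j)"
      unfolding eq by (rule P3[rule_format]) (auto simp: trunc_def)
    also have "\<dots> \<le> (\<Sum>i<j. \<bar>real_of_int (x $ i)\<bar> * c i) + \<bar>real_of_int (x $ j)\<bar> * c j"
      using Suc(1)[OF Suc_leD[OF Suc(2)]] single[of j "x $ j"] Suc(2) by simp
    finally show ?case by simp
  qed
  have "trunc n n x = x" using x unfolding trunc_def by (auto intro!: eq_vecI)
  then have "f x \<le> (\<Sum>i<n. \<bar>real_of_int (x $ i)\<bar> * c i)" using main[of n] by simp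
  also have "\<dots> \<le> (\<Sum>i<n. (\<Sum>i<n. \<bar>real_of_int (x $ i)\<bar>) * c i)"
  proof (rule sum_mono)
    fix i assume i: "i \<in> {..<n}"
    have "\<bar>real_of_int (x $ i)\<bar> \<le> (\<Sum>i<n. \<bar>real_of_int (x $ i)\<bar>)"
      using i by (intro member_le_sum) auto
    then show "\<bar>real_of_int (x $ i)\<bar> * c i \<le> (\<Sum>i<n. \<bar>real_of_int (x $ i)\<bar>) * c i"
      using c0[of i] i by (intro mult_right_mono) auto
  qed
  also have "\<dots> = (\<Sum>i<n. \<bar>real_of_int (x $ i)\<bar>) * (\<Sum>i<n. f (unit_vec n i) + f (- unit_vec n i))"
    unfolding c_def by (simp add: sum_distrib_left)
  finally show ?thesis .
qed

lemma sint_sc: "x \<in> carrier_vec n \<Longrightarrow> (\<Sum>i<n. \<bar>real_of_int (x $ i)\<bar>) = sc (map_vec complex_of_int x)"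
  unfolding sc_def by (auto intro!: sum.cong)

lemma approx_bound:
  assumes M: "M \<in> carrier_mat n n" and w: "w \<in> carrier_vec n" and t: "t \<in> carrier_vec n"
    and e: "e \<in> carrier_vec n" and eb: "\<forall>i<n. cmod (e $ i) \<le> 1"
    and we: "map_vec complex_of_int w = of_nat N \<cdot>\<^sub>v t + e"
  shows "(\<Sum>i<n. \<bar>real_of_int ((M *\<^sub>v w) $ i)\<bar>)
     \<le> real N * sc (map_mat complex_of_int M *\<^sub>v t) + mnorm (map_mat complex_of_int M)"
proof -
  define Mc where "Mc = map_mat complex_of_int M"
  have Mc: "Mc \<in> carrier_mat n n" using M unfolding Mc_def by simp
  have "(\<Sum>i<n. \<bar>real_of_int ((M *\<^sub>v w) $ i)\<bar>) = sc (map_vec complex_of_int (M *\<^sub>v w))"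
    using M w by (intro sint_sc) simp
  also have "map_vec complex_of_int (M *\<^sub>v w) = Mc *\<^sub>v (of_nat N \<cdot>\<^sub>v t + e)"
    unfolding Mc_def we[symmetric] by (rule of_int_hom.mult_mat_vec_hom[OF M w])
  also have "\<dots> = of_nat N \<cdot>\<^sub>v (Mc *\<^sub>v t) + Mc *\<^sub>v e"
    using Mc t e by (simp add: mult_add_distrib_mat_vec mult_mat_vec)
  also have "sc \<dots> \<le> sc (of_nat N \<cdot>\<^sub>v (Mc *\<^sub>v t)) + sc (Mc *\<^sub>v e)"
    using Mc t e by (intro sc_add[of _ n]) auto
  also have "sc (of_nat N \<cdot>\<^sub>v (Mc *\<^sub>v t)) = real N * sc (Mc *\<^sub>v t)"
    by (simp add: sc_smult)
  also have "sc (Mc *\<^sub>v e) \<le> mnorm Mc * 1"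
    by (rule sc_mult_bound[OF Mc e]) (use eb in auto)
  finally show ?thesis unfolding Mc_def by simp
qed

lemma floor_err: "cmod (complex_of_int \<lfloor>y\<rfloor> - complex_of_real y) \<le> 1"
proof -
  have "complex_of_int \<lfloor>y\<rfloor> - complex_of_real y = complex_of_real (of_int \<lfloor>y\<rfloor> - y)" by simp
  then have "cmod (complex_of_int \<lfloor>y\<rfloor> - complex_of_real y) = \<bar>of_int \<lfloor>y\<rfloor> - y\<bar>"
    by (metis norm_of_real)
  also have "\<dots> \<le> 1" by linarith
  finally show ?thesis .
qed

lemma vanish:
  fixes f :: "int vec \<Rightarrow> real"
  assumes P0: "\<forall>w\<in>carrier_vec n. 0 \<le> f w"
    and P1: "f (0\<^sub>v n) = 0"
    and P2: "\<forall>w\<in>carrier_vec n. \<forall>N::nat. f (of_nat N \<cdot>\<^sub>v w) = real N * f w"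
    and P3: "\<forall>v\<in>carrier_vec n. \<forall>w\<in>carrier_vec n. f (v + w) \<le> f v + f w"
    and P4: "\<forall>w\<in>carrier_vec n. f (A *\<^sub>v w) = f w"
    and A: "A \<in> carrier_mat n n" and B: "B \<in> carrier_mat n n" and AB: "A * B = 1\<^sub>m n"
    and v: "v \<in> carrier_vec n"
    and s: "s \<in> carrier_vec n" and u: "u \<in> carrier_vec n"
    and sre: "\<forall>i<n. Im (s $ i) = 0"
    and su: "s + u = map_vec complex_of_int v"
    and limA: "(\<lambda>k. sc (map_mat complex_of_int (A ^\<^sub>m k) *\<^sub>v s)) \<longlonglongrightarrow> 0"
    and limB: "(\<lambda>k. sc (map_mat complex_of_int (B ^\<^sub>m k) *\<^sub>v u)) \<longlonglongrightarrow> 0"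
  shows "f v = 0"
proof -
  have P4B: "\<forall>w\<in>carrier_vec n. f (B *\<^sub>v w) = f w"
  proof
    fix w :: "int vec" assume w: "w \<in> carrier_vec n"
    have "f (B *\<^sub>v w) = f (A *\<^sub>v (B *\<^sub>v w))" using P4 B w by simp
    also have "A *\<^sub>v (B *\<^sub>v w) = (A * B) *\<^sub>v w" using A B w by (simp add: assoc_mult_mat_vec)
    also have "\<dots> = w" using AB w by simp
    finally show "f (B *\<^sub>v w) = f w" .
  qed
  define C where "C = (\<Sum>i<n. f (unit_vec n i) + f (- unit_vec n i))"
  have C0: "0 \<le> C" unfolding C_def using P0 by (intro sum_nonneg) (simp add: add_nonneg_nonneg)
  have bound: "f x \<le> (\<Sum>i<n. \<bar>real_of_int (x $ i)\<bar>) * C" if "x \<in> carrier_vec n" for x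
    unfolding C_def by (rule linear_bound[OF P0 P1 P2 P3 that])
  define a where "a k = sc (map_mat complex_of_int (A ^\<^sub>m k) *\<^sub>v s)" for k
  define b where "b k = sc (map_mat complex_of_int (B ^\<^sub>m k) *\<^sub>v u)" for k
  define mA where "mA k = mnorm (map_mat complex_of_int (A ^\<^sub>m k))" for k
  define mB where "mB k = mnorm (map_mat complex_of_int (B ^\<^sub>m k))" for k
  have key: "real N * f v \<le> C * (real N * (a k + b k) + (mA k + mB k))" for N k
  proof -
    define w1 where "w1 = vec n (\<lambda>i. \<lfloor>real N * Re (s $ i)\<rfloor>)"
    define w2 where "w2 = of_nat N \<cdot>\<^sub>v v - w1"
    define e1 where "e1 = map_vec complex_of_int w1 - of_nat N \<cdot>\<^sub>v s"
    define e2 where "e2 = map_vec complex_of_int w2 - of_nat N \<cdot>\<^sub>v u"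
    have w1: "w1 \<in> carrier_vec n" and w2: "w2 \<in> carrier_vec n" unfolding w1_def w2_def using v by auto
    have sre': "s $ i = complex_of_real (Re (s $ i))" if "i < n" for i
      using sre that by (simp add: complex_eq_iff)
    have vi: "complex_of_int (v $ i) = s $ i + u $ i" if "i < n" for i
      using arg_cong[OF su, of "\<lambda>x. x $ i"] that s u v by simp
    have e1i: "e1 $ i = complex_of_int \<lfloor>real N * Re (s $ i)\<rfloor> - complex_of_real (real N * Re (s $ i))"
      if "i < n" for i
      unfolding e1_def w1_def using that s sre'[OF that] by simp
    have e2i: "e2 $ i = - (complex_of_int \<lfloor>real N * Re (s $ i)\<rfloor> - complex_of_real (real N * Re (s $ i)))"
      if "i < n" for i
    proof -
      have "e2 $ i = of_nat N * complex_of_int (v $ i) - complex_of_int \<lfloor>real N * Re (s $ i)\<rfloor> - of_nat N * u $ i"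
        unfolding e2_def w2_def w1_def using that s u v by simp
      also have "\<dots> = of_nat N * s $ i - complex_of_int \<lfloor>real N * Re (s $ i)\<rfloor>"
        using vi[OF that] by (simp add: algebra_simps)
      also have "\<dots> = - (complex_of_int \<lfloor>real N * Re (s $ i)\<rfloor> - complex_of_real (real N * Re (s $ i)))"
        using sre'[OF that] by (metis minus_diff_eq of_real_mult of_real_of_nat_eq)
      finally show ?thesis .
    qed
    have e1b: "\<forall>i<n. cmod (e1 $ i) \<le> 1"
      using e1i floor_err[of "real N * Re (s $ _)"] by (simp del: of_real_mult)
    have e2b: "\<forall>i<n. cmod (e2 $ i) \<le> 1"
      using e2i floor_err[of "real N * Re (s $ _)"] by (metis norm_minus_cancel)
    have e1c: "e1 \<in> carrier_vec n" and e2c: "e2 \<in> carrier_vec n" unfolding e1_def e2_def using w1 w2 s u by auto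
    have we1: "map_vec complex_of_int w1 = of_nat N \<cdot>\<^sub>v s + e1"
      unfolding e1_def using w1 s by (intro eq_vecI) auto
    have we2: "map_vec complex_of_int w2 = of_nat N \<cdot>\<^sub>v u + e2"
      unfolding e2_def using w2 u by (intro eq_vecI) auto
    have "real N * f v = f (of_nat N \<cdot>\<^sub>v v)" using P2 v by simp
    also have "of_nat N \<cdot>\<^sub>v v = w1 + w2" unfolding w2_def using w1 v by (intro eq_vecI) auto
    also have "f (w1 + w2) \<le> f w1 + f w2" using P3 w1 w2 by simp
    also have "f w1 = f (A ^\<^sub>m k *\<^sub>v w1)" using pow_invariant[OF A P4 w1] by simp
    also have "\<dots> \<le> (\<Sum>i<n. \<bar>real_of_int ((A ^\<^sub>m k *\<^sub>v w1) $ i)\<bar>) * C" by (intro bound mult_mat_vec_carrier[OF pow_carrier_mat[OF A] w1])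
    also have "\<dots> \<le> (real N * a k + mA k) * C" unfolding a_def mA_def
      by (intro mult_right_mono C0 approx_bound[OF _ w1 s e1c e1b we1]) (use A in simp)
    also have "f w2 = f (B ^\<^sub>m k *\<^sub>v w2)" using pow_invariant[OF B P4B w2] by simp
    also have "\<dots> \<le> (\<Sum>i<n. \<bar>real_of_int ((B ^\<^sub>m k *\<^sub>v w2) $ i)\<bar>) * C" by (intro bound mult_mat_vec_carrier[OF pow_carrier_mat[OF B] w2])
    also have "\<dots> \<le> (real N * b k + mB k) * C" unfolding b_def mB_def
      by (intro mult_right_mono C0 approx_bound[OF _ w2 u e2c e2b we2]) (use B in simp)
    finally show ?thesis by (simp add: algebra_simps)
  qed
  have lek: "f v \<le> C * (a k + b k)" for k
  proof (rule ccontr)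
    assume "\<not> f v \<le> C * (a k + b k)"
    then have d: "0 < f v - C * (a k + b k)" by simp
    obtain N :: nat where N: "C * (mA k + mB k) / (f v - C * (a k + b k)) < real N"
      using reals_Archimedean2 by blast
    have "C * (mA k + mB k) < real N * (f v - C * (a k + b k))"
      using N d by (simp add: divide_less_eq mult.commute)
    then show False using key[of N k] by (simp add: algebra_simps)
  qed
  have "(\<lambda>k. C * (a k + b k)) \<longlonglongrightarrow> C * (0 + 0)"
    unfolding a_def b_def by (intro tendsto_mult tendsto_const tendsto_add limA limB)
  then have "f v \<le> 0" using lek by (intro LIMSEQ_le_const[of _ 0]) auto
  then show ?thesis using P0 v by (meson antisym)
qed



definition re_vec :: "complex vec \<Rightarrow> complex vec" where
  "re_vec x = map_vec (\<lambda>z. complex_of_real (Re z)) x"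

lemma re_vec_commute:
  assumes M: "M \<in> carrier_mat n n" and x: "x \<in> carrier_vec n"
  shows "map_mat complex_of_int M *\<^sub>v re_vec x = re_vec (map_mat complex_of_int M *\<^sub>v x)"
proof (rule eq_vecI)
  fix i assume "i < dim_vec (re_vec (map_mat complex_of_int M *\<^sub>v x))"
  then have i: "i < n" using M by (simp add: re_vec_def)
  have "(map_mat complex_of_int M *\<^sub>v re_vec x) $ i = (\<Sum>j<n. of_int (M $$ (i,j)) * complex_of_real (Re (x $ j)))"
    using M x i by (simp add: re_vec_def mult_mat_vec_def scalar_prod_def atLeast0LessThan)
  also have "\<dots> = complex_of_real (\<Sum>j<n. Re (of_int (M $$ (i,j)) * x $ j))"
    by (simp add: of_real_sum)
  also have "\<dots> = complex_of_real (Re (\<Sum>j<n. of_int (M $$ (i,j)) * x $ j))"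
    by (simp add: Re_sum)
  also have "\<dots> = re_vec (map_mat complex_of_int M *\<^sub>v x) $ i"
    using M x i by (simp add: re_vec_def mult_mat_vec_def scalar_prod_def atLeast0LessThan)
  finally show "(map_mat complex_of_int M *\<^sub>v re_vec x) $ i = re_vec (map_mat complex_of_int M *\<^sub>v x) $ i" .
qed (use M in \<open>simp add: re_vec_def\<close>)

lemma mmv_carrier: "M \<in> carrier_mat n m \<Longrightarrow> M *\<^sub>v x \<in> carrier_vec n"
  by (metis carrier_matD(1) carrier_vecI dim_mult_mat_vec)

lemma sc_re_vec: "sc (re_vec x) \<le> sc x"
  unfolding sc_def re_vec_def by (auto intro!: sum_mono abs_Re_le_cmod)

lemma diag_mult:
  assumes D: "D \<in> carrier_mat n n" and dg: "diagonal_mat D" and y: "y \<in> carrier_vec n"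
  shows "D *\<^sub>v y = vec n (\<lambda>i. D $$ (i,i) * y $ i)"
proof (rule eq_vecI)
  fix i assume "i < dim_vec (vec n (\<lambda>i. D $$ (i,i) * y $ i))"
  then have i: "i < n" by simp
  have "(D *\<^sub>v y) $ i = (\<Sum>j<n. D $$ (i,j) * y $ j)"
    using D y i by (simp add: mult_mat_vec_def scalar_prod_def atLeast0LessThan)
  also have "\<dots> = (\<Sum>j<n. if j = i then D $$ (i,i) * y $ i else 0)"
    using dg D i unfolding diagonal_mat_def by (intro sum.cong) auto
  also have "\<dots> = D $$ (i,i) * y $ i" using i by simp
  finally show "(D *\<^sub>v y) $ i = vec n (\<lambda>i. D $$ (i,i) * y $ i) $ i" using i by simp
qed (use D in simp)

lemma pow_mult_vec_Suc:
  assumes M: "M \<in> carrier_mat n n" and x: "x \<in> carrier_vec n"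
  shows "M ^\<^sub>m Suc k *\<^sub>v x = M ^\<^sub>m k *\<^sub>v (M *\<^sub>v x)"
proof -
  have "M ^\<^sub>m Suc k *\<^sub>v x = (M ^\<^sub>m k * M) *\<^sub>v x" by simp
  also have "\<dots> = M ^\<^sub>m k *\<^sub>v (M *\<^sub>v x)"
    by (rule assoc_mult_mat_vec[of _ n n _ n]) (use M x in auto)
  finally show ?thesis .
qed

lemma decomp:
  assumes A: "A \<in> carrier_mat n n" and B: "B \<in> carrier_mat n n"
    and AB: "A * B = 1\<^sub>m n" and BA: "B * A = 1\<^sub>m n"
    and diag: "\<exists>D. diagonal_mat D \<and> similar_mat (map_mat complex_of_int A) D"
    and ev: "\<And>z. eigenvalue (map_mat complex_of_int A) z \<Longrightarrow> cmod z \<noteq> 1"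
    and v: "v \<in> carrier_vec n"
  shows "\<exists>s u. s \<in> carrier_vec n \<and> u \<in> carrier_vec n \<and> (\<forall>i<n. Im (s $ i) = 0) \<and>
     s + u = map_vec complex_of_int v \<and>
     (\<lambda>k. sc (map_mat complex_of_int (A ^\<^sub>m k) *\<^sub>v s)) \<longlonglongrightarrow> 0 \<and>
     (\<lambda>k. sc (map_mat complex_of_int (B ^\<^sub>m k) *\<^sub>v u)) \<longlonglongrightarrow> 0"
proof -
  define Ac where "Ac = map_mat complex_of_int A"
  define Bc where "Bc = map_mat complex_of_int B"
  have Ac: "Ac \<in> carrier_mat n n" and Bc: "Bc \<in> carrier_mat n n" unfolding Ac_def Bc_def using A B by auto
  have BAc: "Bc * Ac = 1\<^sub>m n" unfolding Ac_def Bc_def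
    using of_int_hom.mat_hom_mult[OF B A] BA of_int_hom.mat_hom_one by metis
  obtain D where dg: "diagonal_mat D" and sim: "similar_mat Ac D" using diag unfolding Ac_def by blast
  from similar_matD[OF sim] obtain n' P Q where PQ: "{Ac, D, P, Q} \<subseteq> carrier_mat n' n'"
    "P * Q = 1\<^sub>m n'" "Q * P = 1\<^sub>m n'" "Ac = P * D * Q" by blast
  have "n' = n" using PQ(1) Ac by auto
  then have D: "D \<in> carrier_mat n n" and P: "P \<in> carrier_mat n n" and Q: "Q \<in> carrier_mat n n"
    and PQ1: "P * Q = 1\<^sub>m n" and QP1: "Q * P = 1\<^sub>m n" and AcPDQ: "Ac = P * D * Q" using PQ by auto
  have AcP: "Ac * P = P * D"
  proof -
    have "Ac * P = P * D * (Q * P)" unfolding AcPDQ using P D Q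
      by (simp add: assoc_mult_mat[of _ n n _ n _ n])
    also have "\<dots> = P * D" using P D QP1 by simp
    finally show ?thesis .
  qed
  define dv where "dv k y = vec n (\<lambda>i. D $$ (i,i) ^ k * y $ i)" for k y
  define iv where "iv k y = vec n (\<lambda>i. y $ i / D $$ (i,i) ^ k)" for k y
  have AP: "Ac *\<^sub>v (P *\<^sub>v y) = P *\<^sub>v dv 1 y" if y: "y \<in> carrier_vec n" for y
  proof -
    have "Ac *\<^sub>v (P *\<^sub>v y) = (Ac * P) *\<^sub>v y" using Ac P y by simp
    also have "\<dots> = (P * D) *\<^sub>v y" by (simp add: AcP)
    also have "\<dots> = P *\<^sub>v (D *\<^sub>v y)" using P D y by simp
    also have "D *\<^sub>v y = dv 1 y" unfolding dv_def by (simp add: diag_mult[OF D dg y])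
    finally show ?thesis .
  qed
  have dvc: "dv k y \<in> carrier_vec n" for k y unfolding dv_def by simp
  have ivc: "iv k y \<in> carrier_vec n" for k y unfolding iv_def by simp
  have AkP: "Ac ^\<^sub>m k *\<^sub>v (P *\<^sub>v y) = P *\<^sub>v dv k y" if "y \<in> carrier_vec n" for k y
    using that
  proof (induct k arbitrary: y)
    case 0
    have "dv 0 y = y" unfolding dv_def using 0 by (intro eq_vecI) auto
    then show ?case using Ac P 0 by simp
  next
    case (Suc k)
    have "Ac ^\<^sub>m Suc k *\<^sub>v (P *\<^sub>v y) = Ac ^\<^sub>m k *\<^sub>v (Ac *\<^sub>v (P *\<^sub>v y))"
      using pow_mult_vec_Suc[OF Ac] P Suc(2) by simp
    also have "\<dots> = P *\<^sub>v dv k (dv 1 y)" unfolding AP[OF Suc(2)] by (rule Suc(1)[OF dvc])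
    also have "dv k (dv 1 y) = dv (Suc k) y" unfolding dv_def by (intro eq_vecI) auto
    finally show ?case .
  qed
  have Pe_nz: "P *\<^sub>v unit_vec n i \<noteq> 0\<^sub>v n" if i: "i < n" for i
  proof
    assume h: "P *\<^sub>v unit_vec n i = 0\<^sub>v n"
    have "unit_vec n i = (Q * P) *\<^sub>v unit_vec n i" using QP1 by simp
    also have "\<dots> = Q *\<^sub>v (P *\<^sub>v unit_vec n i)" using Q P by simp
    also have "\<dots> = 0\<^sub>v n" unfolding h using Q by (intro eq_vecI) (auto simp: scalar_prod_def)
    finally have "unit_vec n i $ i = (0\<^sub>v n :: complex vec) $ i" by simp
    then show False using i by simp
  qed
  have APe: "Ac *\<^sub>v (P *\<^sub>v unit_vec n i) = D $$ (i,i) \<cdot>\<^sub>v (P *\<^sub>v unit_vec n i)" if i: "i < n" for i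
  proof -
    have "dv 1 (unit_vec n i) = D $$ (i,i) \<cdot>\<^sub>v unit_vec n i" unfolding dv_def
      by (intro eq_vecI) (auto simp: unit_vec_def)
    then show ?thesis using AP[of "unit_vec n i"] P by (simp add: mult_mat_vec)
  qed
  have Dne1: "cmod (D $$ (i,i)) \<noteq> 1" if i: "i < n" for i
  proof -
    have "eigenvector Ac (P *\<^sub>v unit_vec n i) (D $$ (i,i))"
      unfolding eigenvector_def using Ac P Pe_nz[OF i] APe[OF i] by auto
    then show ?thesis using ev unfolding Ac_def eigenvalue_def by blast
  qed
  have Dnz: "D $$ (i,i) \<noteq> 0" if i: "i < n" for i
  proof
    assume h: "D $$ (i,i) = 0"
    have "P *\<^sub>v unit_vec n i = (Bc * Ac) *\<^sub>v (P *\<^sub>v unit_vec n i)" using BAc P by simp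
    also have "\<dots> = Bc *\<^sub>v (Ac *\<^sub>v (P *\<^sub>v unit_vec n i))" using Bc Ac P by simp
    also have "\<dots> = 0\<^sub>v n" unfolding APe[OF i] h using Bc P
      by (intro eq_vecI) (auto simp: scalar_prod_def)
    finally show False using Pe_nz[OF i] by simp
  qed
  have BP: "Bc *\<^sub>v (P *\<^sub>v y) = P *\<^sub>v iv 1 y" if y: "y \<in> carrier_vec n" for y
  proof -
    have "y = dv 1 (iv 1 y)" unfolding dv_def iv_def using y Dnz by (intro eq_vecI) auto
    then have "Bc *\<^sub>v (P *\<^sub>v y) = Bc *\<^sub>v (Ac *\<^sub>v (P *\<^sub>v iv 1 y))" using AP[OF ivc] by simp
    also have "\<dots> = (Bc * Ac) *\<^sub>v (P *\<^sub>v iv 1 y)"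
      using assoc_mult_mat_vec[OF Bc Ac mult_mat_vec_carrier[OF P ivc]] by simp
    also have "\<dots> = P *\<^sub>v iv 1 y" using BAc mult_mat_vec_carrier[OF P ivc] by simp
    finally show ?thesis .
  qed
  have BkP: "Bc ^\<^sub>m k *\<^sub>v (P *\<^sub>v y) = P *\<^sub>v iv k y" if "y \<in> carrier_vec n" for k y
    using that
  proof (induct k arbitrary: y)
    case 0
    have "iv 0 y = y" unfolding iv_def using 0 by (intro eq_vecI) auto
    then show ?case using Bc P 0 by simp
  next
    case (Suc k)
    have "Bc ^\<^sub>m Suc k *\<^sub>v (P *\<^sub>v y) = Bc ^\<^sub>m k *\<^sub>v (Bc *\<^sub>v (P *\<^sub>v y))"
      using pow_mult_vec_Suc[OF Bc] P Suc(2) by simp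
    also have "\<dots> = P *\<^sub>v iv k (iv 1 y)" unfolding BP[OF Suc(2)] by (rule Suc(1)[OF ivc])
    also have "iv k (iv 1 y) = iv (Suc k) y" unfolding iv_def by (intro eq_vecI) (auto simp: field_simps)
    finally show ?case .
  qed
  define w where "w = Q *\<^sub>v map_vec complex_of_int v"
  define ws where "ws = vec n (\<lambda>i. if cmod (D $$ (i,i)) < 1 then w $ i else 0)"
  define wu where "wu = vec n (\<lambda>i. if cmod (D $$ (i,i)) < 1 then 0 else w $ i)"
  have wc: "w \<in> carrier_vec n" unfolding w_def by (rule mult_mat_vec_carrier[OF Q]) (use v in simp)
  have wsc: "ws \<in> carrier_vec n" and wuc: "wu \<in> carrier_vec n" unfolding ws_def wu_def by auto
  define s where "s = re_vec (P *\<^sub>v ws)"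
  define u where "u = re_vec (P *\<^sub>v wu)"
  have sc': "s \<in> carrier_vec n" and uc: "u \<in> carrier_vec n" unfolding s_def u_def re_vec_def carrier_vec_def using P by auto
  have sre: "\<forall>i<n. Im (s $ i) = 0" unfolding s_def re_vec_def using P by simp
  have "P *\<^sub>v ws + P *\<^sub>v wu = P *\<^sub>v (ws + wu)" using P wsc wuc by (simp add: mult_add_distrib_mat_vec)
  also have "ws + wu = w" unfolding ws_def wu_def using wc by (intro eq_vecI) auto
  also have "P *\<^sub>v w = map_vec complex_of_int v" unfolding w_def using P Q v PQ1
    by (simp add: assoc_mult_mat_vec[symmetric, of _ n n _ n])
  finally have sum0: "P *\<^sub>v ws + P *\<^sub>v wu = map_vec complex_of_int v" .
  have su: "s + u = map_vec complex_of_int v"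
  proof (rule eq_vecI)
    fix i assume "i < dim_vec (map_vec complex_of_int v)"
    then have i: "i < n" using v by simp
    have "(s + u) $ i = complex_of_real (Re ((P *\<^sub>v ws) $ i + (P *\<^sub>v wu) $ i))"
      unfolding s_def u_def re_vec_def using i P by simp
    also have "(P *\<^sub>v ws) $ i + (P *\<^sub>v wu) $ i = map_vec complex_of_int v $ i"
      using arg_cong[OF sum0, of "\<lambda>x. x $ i"] i P by simp
    finally show "(s + u) $ i = map_vec complex_of_int v $ i" using i v by simp
  qed (use sc' uc v in simp)
  have bound: "sc (P *\<^sub>v y) \<le> mnorm P * sc y" if "y \<in> carrier_vec n" for y
    by (rule sc_mult_bound[OF P that]) (use that in \<open>auto simp: sc_def intro!: member_le_sum\<close>)
  have limA: "(\<lambda>k. sc (map_mat complex_of_int (A ^\<^sub>m k) *\<^sub>v s)) \<longlonglongrightarrow> 0"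
  proof (rule tendsto_sandwich[of "\<lambda>_. 0"])
    show "\<forall>\<^sub>F k in sequentially. 0 \<le> sc (map_mat complex_of_int (A ^\<^sub>m k) *\<^sub>v s)"
      by (simp add: sc_nonneg)
    show "(\<lambda>_. 0::real) \<longlonglongrightarrow> 0" by simp
    have "(\<lambda>k. mnorm P * (\<Sum>i<n. cmod (D $$ (i,i)) ^ k * cmod (ws $ i))) \<longlonglongrightarrow> mnorm P * (\<Sum>i<n. 0)"
    proof (intro tendsto_mult tendsto_const tendsto_sum)
      fix i assume "i \<in> {..<n}"
      show "(\<lambda>k. cmod (D $$ (i,i)) ^ k * cmod (ws $ i)) \<longlonglongrightarrow> 0"
      proof (cases "cmod (D $$ (i,i)) < 1")
        case True
        then have h: "norm (cmod (D $$ (i,i))) < 1" by simp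
        show ?thesis by (rule tendsto_mult_left_zero[OF LIMSEQ_power_zero[OF h]])
      next
        case False
        then show ?thesis using \<open>i \<in> {..<n}\<close> unfolding ws_def by simp
      qed
    qed
    then show "(\<lambda>k. mnorm P * (\<Sum>i<n. cmod (D $$ (i,i)) ^ k * cmod (ws $ i))) \<longlonglongrightarrow> 0" by simp
    show "\<forall>\<^sub>F k in sequentially. sc (map_mat complex_of_int (A ^\<^sub>m k) *\<^sub>v s)
       \<le> mnorm P * (\<Sum>i<n. cmod (D $$ (i,i)) ^ k * cmod (ws $ i))"
    proof (intro always_eventually allI)
      fix k
      have "map_mat complex_of_int (A ^\<^sub>m k) = Ac ^\<^sub>m k" unfolding Ac_def by (rule of_int_hom.mat_hom_pow[OF A])
      then have "map_mat complex_of_int (A ^\<^sub>m k) *\<^sub>v s = re_vec (Ac ^\<^sub>m k *\<^sub>v (P *\<^sub>v ws))"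
        unfolding s_def using re_vec_commute[OF pow_carrier_mat[OF A, of k], of "P *\<^sub>v ws"] P wsc by simp
      also have "\<dots> = re_vec (P *\<^sub>v dv k ws)" using AkP[OF wsc] by simp
      finally have "sc (map_mat complex_of_int (A ^\<^sub>m k) *\<^sub>v s) \<le> sc (P *\<^sub>v dv k ws)"
        using sc_re_vec by simp
      also have "\<dots> \<le> mnorm P * sc (dv k ws)" by (rule bound[OF dvc])
      also have "sc (dv k ws) = (\<Sum>i<n. cmod (D $$ (i,i)) ^ k * cmod (ws $ i))"
        unfolding sc_def dv_def by (simp add: norm_mult norm_power)
      finally show "sc (map_mat complex_of_int (A ^\<^sub>m k) *\<^sub>v s)
       \<le> mnorm P * (\<Sum>i<n. cmod (D $$ (i,i)) ^ k * cmod (ws $ i))" .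
    qed
  qed
  have limB: "(\<lambda>k. sc (map_mat complex_of_int (B ^\<^sub>m k) *\<^sub>v u)) \<longlonglongrightarrow> 0"
  proof (rule tendsto_sandwich[of "\<lambda>_. 0"])
    show "\<forall>\<^sub>F k in sequentially. 0 \<le> sc (map_mat complex_of_int (B ^\<^sub>m k) *\<^sub>v u)"
      by (simp add: sc_nonneg)
    show "(\<lambda>_. 0::real) \<longlonglongrightarrow> 0" by simp
    have "(\<lambda>k. mnorm P * (\<Sum>i<n. (1 / cmod (D $$ (i,i))) ^ k * cmod (wu $ i))) \<longlonglongrightarrow> mnorm P * (\<Sum>i<n. 0)"
    proof (intro tendsto_mult tendsto_const tendsto_sum)
      fix i assume i: "i \<in> {..<n}"
      show "(\<lambda>k. (1 / cmod (D $$ (i,i))) ^ k * cmod (wu $ i)) \<longlonglongrightarrow> 0"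
      proof (cases "cmod (D $$ (i,i)) < 1")
        case False
        then have "1 < cmod (D $$ (i,i))" using Dne1[of i] i by auto
        then have h: "norm (1 / cmod (D $$ (i,i))) < 1" by (simp add: divide_less_eq)
        show ?thesis by (rule tendsto_mult_left_zero[OF LIMSEQ_power_zero[OF h]])
      next
        case True
        then show ?thesis using i unfolding wu_def by simp
      qed
    qed
    then show "(\<lambda>k. mnorm P * (\<Sum>i<n. (1 / cmod (D $$ (i,i))) ^ k * cmod (wu $ i))) \<longlonglongrightarrow> 0" by simp
    show "\<forall>\<^sub>F k in sequentially. sc (map_mat complex_of_int (B ^\<^sub>m k) *\<^sub>v u)
       \<le> mnorm P * (\<Sum>i<n. (1 / cmod (D $$ (i,i))) ^ k * cmod (wu $ i))"
    proof (intro always_eventually allI)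
      fix k
      have "map_mat complex_of_int (B ^\<^sub>m k) = Bc ^\<^sub>m k" unfolding Bc_def by (rule of_int_hom.mat_hom_pow[OF B])
      then have "map_mat complex_of_int (B ^\<^sub>m k) *\<^sub>v u = re_vec (Bc ^\<^sub>m k *\<^sub>v (P *\<^sub>v wu))"
        unfolding u_def using re_vec_commute[OF pow_carrier_mat[OF B, of k], of "P *\<^sub>v wu"] P wuc by simp
      also have "\<dots> = re_vec (P *\<^sub>v iv k wu)" using BkP[OF wuc] by simp
      finally have "sc (map_mat complex_of_int (B ^\<^sub>m k) *\<^sub>v u) \<le> sc (P *\<^sub>v iv k wu)"
        using sc_re_vec by simp
      also have "\<dots> \<le> mnorm P * sc (iv k wu)" by (rule bound[OF ivc])
      also have "sc (iv k wu) = (\<Sum>i<n. (1 / cmod (D $$ (i,i))) ^ k * cmod (wu $ i))"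
        unfolding sc_def iv_def by (simp add: norm_divide norm_power power_one_over)
      finally show "sc (map_mat complex_of_int (B ^\<^sub>m k) *\<^sub>v u)
       \<le> mnorm P * (\<Sum>i<n. (1 / cmod (D $$ (i,i))) ^ k * cmod (wu $ i))" .
    qed
  qed
  show ?thesis by (rule exI[of _ s], rule exI[of _ u]) (intro conjI sc' uc sre su limA limB)
qed


theorem lemma8:
  fixes n :: nat and A :: "int mat" and l :: "int vec \<times> int \<Rightarrow> real"
  assumes "A \<in> carrier_mat n n"
    and "invertible_mat A"
    and "\<exists>D. diagonal_mat D \<and> similar_mat (map_mat complex_of_int A) D"
    and "\<And>z. eigenvalue (map_mat complex_of_int A) z \<Longrightarrow> cmod z \<noteq> 1"
    and "length_function (sdp_group n A) l"
  shows "\<forall>v\<in>carrier_vec n. l (v, 0) = 0"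
proof
  fix v :: "int vec" assume v: "v \<in> carrier_vec n"
  define B where "B = inv_mat_int A"
  have B: "B \<in> carrier_mat n n" and AB: "A * B = 1\<^sub>m n" and BA: "B * A = 1\<^sub>m n"
    using inv_mat_int_props[OF assms(1,2)] unfolding B_def by auto
  note gf = group_facts[OF assms(1,2,5)]
  obtain s u where su: "s \<in> carrier_vec n" "u \<in> carrier_vec n" "\<forall>i<n. Im (s $ i) = 0"
     "s + u = map_vec complex_of_int v"
     "(\<lambda>k. sc (map_mat complex_of_int (A ^\<^sub>m k) *\<^sub>v s)) \<longlonglongrightarrow> 0"
     "(\<lambda>k. sc (map_mat complex_of_int (B ^\<^sub>m k) *\<^sub>v u)) \<longlonglongrightarrow> 0"
    using decomp[OF assms(1) B AB BA assms(3) assms(4) v] by blast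
  show "l (v, 0) = 0"
    using vanish[where f = "\<lambda>w. l (w, 0)", OF gf(1) gf(2) gf(3) gf(4) gf(5) assms(1) B AB v su]
    by simp
qed

end
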